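(* Let $K\subset\mathbb R^2$ be a nondegenerate triangle with vertices $a_1,a_2,a_3$, area $|K|$, edge lengths $e_1,e_2,e_3$ (with $e_i$ the length of the edge opposite $a_i$), and edge midpoints $m_k=(a_i+a_j)/2$ for $\{i,j,k\}=\{1,2,3\}$. Let $v:K\to\mathbb R$ be continuous, affine on each of the four subtriangles with vertex sets $\{a_1,m_3,m_2\}$, $\{m_3,a_2,m_1\}$, $\{m_2,m_1,a_3\}$, $\{m_1,m_2,m_3\}$, and satisfy $v(a_1)=v(a_2)=v(a_3)=0$. Then $$\int_K|\nabla v|^2\,dx\le\frac{1}{|K|}\Big(\sum_{i=1}^3e_i^2\Big)\sum_{i=1}^3 v(m_i)^2 .$$ *)

theory Defs
  imports "HOL-Analysis.Analysis"
begin

text \<open>At points of non-differentiability (a null set for the piecewise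
  affine functions considered) the value is unspecified, which does not affect integrals.\<close>
definition grad :: "(real^2 \<Rightarrow> real) \<Rightarrow> real^2 \<Rightarrow> real^2" where
  "grad f x = (SOME g. (f has_derivative (\<lambda>h. g \<bullet> h)) (at x))"

definition affine_on_set :: "(real^2 \<Rightarrow> real) \<Rightarrow> (real^2) set \<Rightarrow> bool" where
  "affine_on_set f S \<longleftrightarrow> (\<exists>g c. \<forall>x\<in>S. f x = g \<bullet> x + c)"

end

theory Submission
  imports Defs
begin

lemma gram2: fixes g1 g2 p1 p2 q1 q2 :: real
  shows "(p1*q2 - p2*q1)^2 * (g1^2+g2^2) = ((g1*p1+g2*p2)*q1 - (g1*q1+g2*q2)*p1)^2 + ((g1*p1+g2*p2)*q2 - (g1*q1+g2*q2)*p2)^2"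
  by algebra

lemma key:
  fixes p1 p2 q1 q2 x1 x2 x3 g11 g12 g21 g22 g31 g32 g41 g42 :: real
  assumes "g11*p1+g12*p2 = 2*x3" "g11*q1+g12*q2 = 2*x2"
   "g21*p1+g22*p2 = -2*x3" "g21*q1 + g22*q2 = 2*x1 - 2*x3"
   "g31*p1+g32*p2 = 2*x1-2*x2" "g31*q1+g32*q2 = -2*x2"
   "g41*p1+g42*p2 = 2*(x1-x2)" "g41*q1+g42*q2 = 2*(x1-x3)"
  shows "\<bar>p1*q2 - p2*q1\<bar>/8 * ((g11^2+g12^2) + (g21^2+g22^2) + (g31^2+g32^2) + (g41^2+g42^2))
     \<le> 1/(\<bar>p1*q2 - p2*q1\<bar>/2) * (((p1-q1)^2+(p2-q2)^2) + (q1^2+q2^2) + (p1^2+p2^2)) * (x1^2+x2^2+x3^2)"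
proof -
  define D where "D = p1*q2 - p2*q1"
  define S where "S = (g11^2+g12^2) + (g21^2+g22^2) + (g31^2+g32^2) + (g41^2+g42^2)"
  define E where "E = ((p1-q1)^2+(p2-q2)^2) + (q1^2+q2^2) + (p1^2+p2^2)"
  define X where "X = x1^2+x2^2+x3^2"
  define P where "P = p1^2+p2^2"
  define Q where "Q = q1^2+q2^2"
  define M where "M = (p1-q1)^2+(p2-q2)^2"
  have s1: "D^2*(g11^2+g12^2) = ((2*x3)*q1 - (2*x2)*p1)^2 + ((2*x3)*q2 - (2*x2)*p2)^2"
    unfolding D_def gram2 assms(1,2) ..
  have s2: "D^2*(g21^2+g22^2) = ((-2*x3)*q1 - (2*x1-2*x3)*p1)^2 + ((-2*x3)*q2 - (2*x1-2*x3)*p2)^2"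
    unfolding D_def gram2 assms(3,4) ..
  have s3: "D^2*(g31^2+g32^2) = ((2*x1-2*x2)*q1 - (-2*x2)*p1)^2 + ((2*x1-2*x2)*q2 - (-2*x2)*p2)^2"
    unfolding D_def gram2 assms(5,6) ..
  have s4: "D^2*(g41^2+g42^2) = ((2*(x1-x2))*q1 - (2*(x1-x3))*p1)^2 + ((2*(x1-x2))*q2 - (2*(x1-x3))*p2)^2"
    unfolding D_def gram2 assms(7,8) ..
  have S: "D^2*S = D^2*(g11^2+g12^2) + D^2*(g21^2+g22^2) + D^2*(g31^2+g32^2) + D^2*(g41^2+g42^2)"
    unfolding S_def by (simp add: algebra_simps)
  have dec: "16*E*X - D^2*S = 4*((2*(x1+x3)^2 + 2*x2^2 + (x1-x2-x3)^2) * P + (2*(x1+x2)^2 + 2*x3^2 + (x1-x2-x3)^2)*Q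
       + (4*X - (x1-x2-x3)^2) * M)"
    unfolding S s1 s2 s3 s4 E_def X_def P_def Q_def M_def by (simp add: power2_eq_square algebra_simps)
  have "(x1-x2-x3)^2 \<le> 3*X" unfolding X_def
    using sum_squares_ge_zero by (smt (verit) power2_eq_square sum_squares_ge_zero power2_diff zero_le_power2 power2_sum)
  hence h4: "(x1-x2-x3)^2 \<le> 4*X" using zero_le_power2[of x1] zero_le_power2[of x2] zero_le_power2[of x3] unfolding X_def by (smt (verit))
  hence "0 \<le> 16*E*X - D^2*S" unfolding dec
    by (intro mult_nonneg_nonneg add_nonneg_nonneg) (use h4 in \<open>auto simp: P_def Q_def M_def\<close>)
  hence le: "D^2*S \<le> 16*E*X" by simp
  show ?thesis
  proof (cases "D = 0")
    case True then show ?thesis by (simp add: D_def)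
  next
    case False
    hence pos: "\<bar>D\<bar> > 0" by simp
    have "\<bar>D\<bar>/8 * S = D^2*S / (8*\<bar>D\<bar>)" using pos by (simp add: power2_eq_square field_simps)
    also have "\<dots> \<le> 16*E*X/(8*\<bar>D\<bar>)" using le pos by (intro divide_right_mono) auto
    also have "\<dots> = 1/(\<bar>D\<bar>/2) * E * X" using pos by (simp add: field_simps)
    finally show ?thesis unfolding D_def S_def E_def X_def .
  qed
qed
lemma grad_affine:
  assumes A: "\<forall>y\<in>T. v y = g \<bullet> y + c" and x: "x \<in> interior T"
  shows "grad v x = g"
proof -
  have d0: "((\<lambda>y. g \<bullet> y + c) has_derivative (\<lambda>h. g \<bullet> h)) (at x within UNIV)"
    by (intro has_derivative_add_const bounded_linear_imp_has_derivative bounded_linear_inner_right)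
  have d: "(v has_derivative (\<lambda>h. g \<bullet> h)) (at x)"
    by (rule has_derivative_transform_within_open[OF d0 open_interior x]) (metis A interior_subset subsetD)
  hence "\<exists>g. (v has_derivative (\<lambda>h. g \<bullet> h)) (at x)" by blast
  hence d': "(v has_derivative (\<lambda>h. grad v x \<bullet> h)) (at x)"
    unfolding grad_def by (rule someI_ex)
  have "(\<lambda>h. grad v x \<bullet> h) = (\<lambda>h. g \<bullet> h)" using has_derivative_unique[OF d' d] .
  hence "grad v x \<bullet> (grad v x - g) = g \<bullet> (grad v x - g)" by metis
  hence "(grad v x - g) \<bullet> (grad v x - g) = 0" by (simp add: inner_diff_left)
  thus ?thesis by simp
qed

lemma cover:
  fixes a1 a2 a3 :: "real^2"
  shows "convex hull {a1,a2,a3} \<subseteq> convex hull {a1, midpoint a1 a2, midpoint a1 a3}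
     \<union> convex hull {midpoint a1 a2, a2, midpoint a2 a3} \<union> convex hull {midpoint a1 a3, midpoint a2 a3, a3}
     \<union> convex hull {midpoint a2 a3, midpoint a1 a3, midpoint a1 a2}"
proof
  fix x assume "x \<in> convex hull {a1,a2,a3}"
  then obtain u v w where uvw: "0 \<le> u" "0 \<le> v" "0 \<le> w" "u+v+w = 1" and x: "x = u *\<^sub>R a1 + v *\<^sub>R a2 + w *\<^sub>R a3"
    unfolding convex_hull_3 by blast
  have u: "u = 1 - v - w" using uvw by simp
  consider "u \<ge> 1/2" | "v \<ge> 1/2" | "w \<ge> 1/2" | "u < 1/2" "v < 1/2" "w < 1/2" by linarith
  thus "x \<in> convex hull {a1, midpoint a1 a2, midpoint a1 a3}
     \<union> convex hull {midpoint a1 a2, a2, midpoint a2 a3} \<union> convex hull {midpoint a1 a3, midpoint a2 a3, a3}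
     \<union> convex hull {midpoint a2 a3, midpoint a1 a3, midpoint a1 a2}"
  proof cases
    case 1
    have "x = (2*u-1) *\<^sub>R a1 + (2 * v) *\<^sub>R (midpoint a1 a2) + (2*w) *\<^sub>R (midpoint a1 a3)"
      unfolding x u by (simp add: vec_eq_iff midpoint_def algebra_simps)
    hence "x \<in> convex hull {a1, midpoint a1 a2, midpoint a1 a3}"
      unfolding convex_hull_3 using uvw 1 by (intro CollectI exI[of _ "2*u-1"] exI[of _ "2 * v"] exI[of _ "2*w"]) auto
    thus ?thesis by blast
  next
    case 2
    have "x = (2*u) *\<^sub>R (midpoint a1 a2) + (2 * v-1) *\<^sub>R a2 + (2*w) *\<^sub>R (midpoint a2 a3)"
      unfolding x u by (simp add: vec_eq_iff midpoint_def algebra_simps)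
    hence "x \<in> convex hull {midpoint a1 a2, a2, midpoint a2 a3}"
      unfolding convex_hull_3 using uvw 2 by (intro CollectI exI[of _ "2*u"] exI[of _ "2 * v-1"] exI[of _ "2*w"]) auto
    thus ?thesis by blast
  next
    case 3
    have "x = (2*u) *\<^sub>R (midpoint a1 a3) + (2 * v) *\<^sub>R (midpoint a2 a3) + (2*w-1) *\<^sub>R a3"
      unfolding x u by (simp add: vec_eq_iff midpoint_def algebra_simps)
    hence "x \<in> convex hull {midpoint a1 a3, midpoint a2 a3, a3}"
      unfolding convex_hull_3 using uvw 3 by (intro CollectI exI[of _ "2*u"] exI[of _ "2 * v"] exI[of _ "2*w-1"]) auto
    thus ?thesis by blast
  next
    case 4
    have "x = (1-2*u) *\<^sub>R (midpoint a2 a3) + (1-2 * v) *\<^sub>R (midpoint a1 a3) + (1-2*w) *\<^sub>R (midpoint a1 a2)"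
      unfolding x u by (simp add: vec_eq_iff midpoint_def algebra_simps)
    hence "x \<in> convex hull {midpoint a2 a3, midpoint a1 a3, midpoint a1 a2}"
      unfolding convex_hull_3 using uvw 4 by (intro CollectI exI[of _ "1-2*u"] exI[of _ "1-2 * v"] exI[of _ "1-2*w"]) auto
    thus ?thesis by blast
  qed
qed

lemma mid_in: "midpoint a b \<in> convex hull {a,b,c::real^2}" "midpoint a c \<in> convex hull {a,b,c::real^2}" "midpoint b c \<in> convex hull {a,b,c::real^2}"
proof -
  show "midpoint a b \<in> convex hull {a,b,c::real^2}" unfolding convex_hull_3 midpoint_def
    by (rule CollectI, rule exI[of _ "1/2"], rule exI[of _ "1/2"], rule exI[of _ 0], simp add: scaleR_add_right)
  show "midpoint a c \<in> convex hull {a,b,c::real^2}" unfolding convex_hull_3 midpoint_def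
    by (rule CollectI, rule exI[of _ "1/2"], rule exI[of _ "0"], rule exI[of _ "1/2"], simp add: scaleR_add_right)
  show "midpoint b c \<in> convex hull {a,b,c::real^2}" unfolding convex_hull_3 midpoint_def
    by (rule CollectI, rule exI[of _ "0"], rule exI[of _ "1/2"], rule exI[of _ "1/2"], simp add: scaleR_add_right)
qed


lemma meas_tri: "measure lebesgue (convex hull {A,B,C::real^2}) = Henstock_Kurzweil_Integration.content (convex hull {A,B,C})"
  using finite_imp_compact_convex_hull[of "{A,B,C}"]
  by (intro measure_completion) (auto dest: compact_imp_closed)

lemma ind_int:
  assumes "T \<subseteq> K" "compact T"
  shows "((\<lambda>x. if x \<in> T then c else 0) has_integral (c * measure lebesgue T)) K"
proof -
  have lm: "T \<in> lmeasurable" using assms(2) by (rule lmeasurable_compact)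
  have "((\<lambda>x. 1::real) has_integral measure lebesgue T) T"
    unfolding lmeasure_integral[OF lm] using integrable_on_const[OF lm] by (rule integrable_integral)
  hence "((\<lambda>x. c * 1) has_integral (c * measure lebesgue T)) T" by (rule has_integral_mult_right)
  hence "((\<lambda>x. c) has_integral (c * measure lebesgue T)) (T \<inter> K)" using assms(1) by (simp add: Int_absorb2)
  thus ?thesis by (subst has_integral_restrict_Int)
qed

lemma absq: "(X::real) = -D/4 \<Longrightarrow> \<bar>X\<bar>/2 = \<bar>D\<bar>/8"
  by auto

lemma sq_norm2: "(norm (g::real^2))^2 = g$1^2 + g$2^2"
  unfolding power2_norm_eq_inner by (simp add: inner_vec_def sum_2 power2_eq_square)

lemma sq_dist2: "(dist (a::real^2) b)^2 = (a$1 - b$1)^2 + (a$2-b$2)^2"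
  by (simp add: dist_norm sq_norm2)

lemma inner2: "(g::real^2) \<bullet> x = g$1 * x$1 + g$2 * x$2"
  by (simp add: inner_vec_def sum_2)

theorem mainTheorem6:
  fixes a1 a2 a3 :: "real^2" and v :: "real^2 \<Rightarrow> real"
  assumes nondeg: "\<not> collinear {a1, a2, a3}"
    and cont: "continuous_on (convex hull {a1, a2, a3}) v"
    and aff1: "affine_on_set v (convex hull {a1, midpoint a1 a2, midpoint a1 a3})"
    and aff2: "affine_on_set v (convex hull {midpoint a1 a2, a2, midpoint a2 a3})"
    and aff3: "affine_on_set v (convex hull {midpoint a1 a3, midpoint a2 a3, a3})"
    and aff4: "affine_on_set v (convex hull {midpoint a2 a3, midpoint a1 a3, midpoint a1 a2})"
    and v0: "v a1 = 0" "v a2 = 0" "v a3 = 0"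
  shows "integral (convex hull {a1, a2, a3}) (\<lambda>x. (norm (grad v x))\<^sup>2)
    \<le> (1 / measure lebesgue (convex hull {a1, a2, a3}))
       * ((dist a2 a3)\<^sup>2 + (dist a1 a3)\<^sup>2 + (dist a1 a2)\<^sup>2)
       * ((v (midpoint a2 a3))\<^sup>2 + (v (midpoint a1 a3))\<^sup>2 + (v (midpoint a1 a2))\<^sup>2)"
proof -
  define K where "K = convex hull {a1, a2, a3}"
  define T1 where "T1 = convex hull {a1, midpoint a1 a2, midpoint a1 a3}"
  define T2 where "T2 = convex hull {midpoint a1 a2, a2, midpoint a2 a3}"
  define T3 where "T3 = convex hull {midpoint a1 a3, midpoint a2 a3, a3}"
  define T4 where "T4 = convex hull {midpoint a2 a3, midpoint a1 a3, midpoint a1 a2}"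
  define RHS where "RHS = (1 / measure lebesgue K)
       * ((dist a2 a3)\<^sup>2 + (dist a1 a3)\<^sup>2 + (dist a1 a2)\<^sup>2)
       * ((v (midpoint a2 a3))\<^sup>2 + (v (midpoint a1 a3))\<^sup>2 + (v (midpoint a1 a2))\<^sup>2)"
  obtain g1 c1 where A1: "\<forall>x\<in>T1. v x = g1 \<bullet> x + c1" using aff1 unfolding affine_on_set_def T1_def by blast
  obtain g2 c2 where A2: "\<forall>x\<in>T2. v x = g2 \<bullet> x + c2" using aff2 unfolding affine_on_set_def T2_def by blast
  obtain g3 c3 where A3: "\<forall>x\<in>T3. v x = g3 \<bullet> x + c3" using aff3 unfolding affine_on_set_def T3_def by blast
  obtain g4 c4 where A4: "\<forall>x\<in>T4. v x = g4 \<bullet> x + c4" using aff4 unfolding affine_on_set_def T4_def by blast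
  have cvK: "convex K" unfolding K_def by (rule convex_convex_hull)
  have sub1: "T1 \<subseteq> K" unfolding T1_def
    by (rule hull_minimal[where S=convex, OF _ cvK]) (auto simp: K_def mid_in hull_inc)
  have sub2: "T2 \<subseteq> K" unfolding T2_def
    by (rule hull_minimal[where S=convex, OF _ cvK]) (auto simp: K_def mid_in hull_inc)
  have sub3: "T3 \<subseteq> K" unfolding T3_def
    by (rule hull_minimal[where S=convex, OF _ cvK]) (auto simp: K_def mid_in hull_inc)
  have sub4: "T4 \<subseteq> K" unfolding T4_def
    by (rule hull_minimal[where S=convex, OF _ cvK]) (auto simp: K_def mid_in hull_inc)
  have cov: "K \<subseteq> T1 \<union> T2 \<union> T3 \<union> T4" unfolding K_def T1_def T2_def T3_def T4_def by (rule cover)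
  define N where "N = frontier T1 \<union> frontier T2 \<union> frontier T3 \<union> frontier T4"
  have negN: "negligible N" unfolding N_def T1_def T2_def T3_def T4_def
    by (intro negligible_Un negligible_convex_frontier convex_convex_hull)
  define h where "h x = (if x \<in> T1 then (norm g1)^2 else 0) + (if x \<in> T2 then (norm g2)^2 else 0)
      + (if x \<in> T3 then (norm g3)^2 else 0) + (if x \<in> T4 then (norm g4)^2 else 0)" for x
  define f where "f x = (norm (grad v x))\<^sup>2" for x
  define f' where "f' x = (if x \<in> N then 0 else f x)" for x
  have inT: "x \<in> interior T" if "x \<in> T" "x \<notin> frontier T" for x T
    using that closure_subset unfolding frontier_def by blast
  have fh: "f' x \<le> h x" if xK: "x \<in> K" for x
  proof (cases "x \<in> K - N")
    case False
    hence "f' x = 0" unfolding f'_def using xK by auto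
    moreover have "0 \<le> h x" unfolding h_def by auto
    ultimately show ?thesis by simp
  next
    case True
    hence f': "f' x = f x" unfolding f'_def by auto
    from True cov have "x \<in> T1 \<or> x \<in> T2 \<or> x \<in> T3 \<or> x \<in> T4" by blast
    thus ?thesis
    proof (elim disjE)
      assume x: "x \<in> T1"
      hence "x \<in> interior T1" using True inT unfolding N_def by blast
      hence "f x = (norm g1)^2" unfolding f_def using grad_affine[OF A1] by simp
      thus ?thesis using x unfolding f' h_def by auto
    next
      assume x: "x \<in> T2"
      hence "x \<in> interior T2" using True inT unfolding N_def by blast
      hence "f x = (norm g2)^2" unfolding f_def using grad_affine[OF A2] by simp
      thus ?thesis using x unfolding f' h_def by auto
    next
      assume x: "x \<in> T3"
      hence "x \<in> interior T3" using True inT unfolding N_def by blast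
      hence "f x = (norm g3)^2" unfolding f_def using grad_affine[OF A3] by simp
      thus ?thesis using x unfolding f' h_def by auto
    next
      assume x: "x \<in> T4"
      hence "x \<in> interior T4" using True inT unfolding N_def by blast
      hence "f x = (norm g4)^2" unfolding f_def using grad_affine[OF A4] by simp
      thus ?thesis using x unfolding f' h_def by auto
    qed
  qed

  define D where "D = (a2$1-a1$1)*(a3$2-a1$2) - (a2$2-a1$2)*(a3$1-a1$1)"
  define x1 where "x1 = v (midpoint a2 a3)"
  define x2 where "x2 = v (midpoint a1 a3)"
  define x3 where "x3 = v (midpoint a1 a2)"
  have mK: "measure lebesgue K = \<bar>D\<bar>/2" unfolding K_def meas_tri content_triangle D_def
    by (simp add: abs_minus_commute algebra_simps)
  have mT1: "measure lebesgue T1 = \<bar>D\<bar>/8" unfolding T1_def meas_tri content_triangle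
    by (rule absq) (simp add: midpoint_def field_simps D_def)
  have mT2: "measure lebesgue T2 = \<bar>D\<bar>/8" unfolding T2_def meas_tri content_triangle
    by (rule absq) (simp add: midpoint_def field_simps D_def)
  have mT3: "measure lebesgue T3 = \<bar>D\<bar>/8" unfolding T3_def meas_tri content_triangle
    by (rule absq) (simp add: midpoint_def field_simps D_def)
  have mT4: "measure lebesgue T4 = \<bar>D\<bar>/8" unfolding T4_def meas_tri content_triangle
    by (rule absq) (simp add: midpoint_def field_simps D_def)
  have V1: "v a1 = g1 \<bullet> a1 + c1" "v (midpoint a1 a2) = g1 \<bullet> (midpoint a1 a2) + c1"
     "v (midpoint a1 a3) = g1 \<bullet> (midpoint a1 a3) + c1"
    using A1 by (simp_all add: T1_def hull_inc)
  have V2: "v a2 = g2 \<bullet> a2 + c2" "v (midpoint a1 a2) = g2 \<bullet> (midpoint a1 a2) + c2"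
     "v (midpoint a2 a3) = g2 \<bullet> (midpoint a2 a3) + c2"
    using A2 by (simp_all add: T2_def hull_inc)
  have V3: "v a3 = g3 \<bullet> a3 + c3" "v (midpoint a1 a3) = g3 \<bullet> (midpoint a1 a3) + c3"
     "v (midpoint a2 a3) = g3 \<bullet> (midpoint a2 a3) + c3"
    using A3 by (simp_all add: T3_def hull_inc)
  have V4: "v (midpoint a2 a3) = g4 \<bullet> (midpoint a2 a3) + c4" "v (midpoint a1 a2) = g4 \<bullet> (midpoint a1 a2) + c4"
     "v (midpoint a1 a3) = g4 \<bullet> (midpoint a1 a3) + c4"
    using A4 by (simp_all add: T4_def hull_inc)
  have E1: "g1$1*(a2$1-a1$1)+g1$2*(a2$2-a1$2) = 2*x3" "g1$1*(a3$1-a1$1)+g1$2*(a3$2-a1$2) = 2*x2"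
    using V1 v0 unfolding x2_def x3_def by (simp_all add: inner2 midpoint_def algebra_simps)
  have E2: "g2$1*(a2$1-a1$1)+g2$2*(a2$2-a1$2) = -2*x3" "g2$1*(a3$1-a1$1)+g2$2*(a3$2-a1$2) = 2*x1-2*x3"
    using V2 v0 unfolding x1_def x3_def by (simp_all add: inner2 midpoint_def algebra_simps)
  have E3: "g3$1*(a2$1-a1$1)+g3$2*(a2$2-a1$2) = 2*x1-2*x2" "g3$1*(a3$1-a1$1)+g3$2*(a3$2-a1$2) = -2*x2"
    using V3 v0 unfolding x1_def x2_def by (simp_all add: inner2 midpoint_def algebra_simps)
  have E4: "g4$1*(a2$1-a1$1)+g4$2*(a2$2-a1$2) = 2*(x1-x2)" "g4$1*(a3$1-a1$1)+g4$2*(a3$2-a1$2) = 2*(x1-x3)"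
    using V4 unfolding x1_def x2_def x3_def by (simp_all add: inner2 midpoint_def algebra_simps)
  have K: "\<bar>D\<bar>/8 * ((g1$1^2+g1$2^2) + (g2$1^2+g2$2^2) + (g3$1^2+g3$2^2) + (g4$1^2+g4$2^2))
     \<le> 1/(\<bar>D\<bar>/2) * ((((a2$1-a1$1)-(a3$1-a1$1))^2+((a2$2-a1$2)-(a3$2-a1$2))^2) + ((a3$1-a1$1)^2+(a3$2-a1$2)^2) + ((a2$1-a1$1)^2+(a2$2-a1$2)^2)) * (x1^2+x2^2+x3^2)"
    unfolding D_def by (rule key[OF E1 E2 E3 E4])
  have d1: "(dist a2 a3)^2 = ((a2$1-a1$1)-(a3$1-a1$1))^2+((a2$2-a1$2)-(a3$2-a1$2))^2"
    by (simp add: sq_dist2)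
  have d2: "(dist a1 a3)^2 = (a3$1-a1$1)^2+(a3$2-a1$2)^2"
    unfolding sq_dist2 by (simp add: power2_eq_square algebra_simps)
  have d3: "(dist a1 a2)^2 = (a2$1-a1$1)^2+(a2$2-a1$2)^2"
    unfolding sq_dist2 by (simp add: power2_eq_square algebra_simps)
  have bound: "(norm g1)^2 * measure lebesgue T1 + (norm g2)^2 * measure lebesgue T2
      + (norm g3)^2 * measure lebesgue T3 + (norm g4)^2 * measure lebesgue T4 \<le> RHS"
  proof -
    have "(norm g1)^2 * measure lebesgue T1 + (norm g2)^2 * measure lebesgue T2
      + (norm g3)^2 * measure lebesgue T3 + (norm g4)^2 * measure lebesgue T4
      = \<bar>D\<bar>/8 * ((g1$1^2+g1$2^2) + (g2$1^2+g2$2^2) + (g3$1^2+g3$2^2) + (g4$1^2+g4$2^2))"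
      unfolding mT1 mT2 mT3 mT4 sq_norm2 by (simp add: algebra_simps)
    also note K
    also have "1/(\<bar>D\<bar>/2) * ((((a2$1-a1$1)-(a3$1-a1$1))^2+((a2$2-a1$2)-(a3$2-a1$2))^2) + ((a3$1-a1$1)^2+(a3$2-a1$2)^2) + ((a2$1-a1$1)^2+(a2$2-a1$2)^2)) * (x1^2+x2^2+x3^2) = RHS"
      unfolding RHS_def mK d1 d2 d3 x1_def x2_def x3_def ..
    finally show ?thesis .
  qed
  have cpt: "compact (convex hull {a, b, c::real^2})" for a b c
    by (rule finite_imp_compact_convex_hull) simp
  have hint: "(h has_integral ((norm g1)^2 * measure lebesgue T1 + (norm g2)^2 * measure lebesgue T2
      + (norm g3)^2 * measure lebesgue T3 + (norm g4)^2 * measure lebesgue T4)) K"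
    unfolding h_def
    by (intro has_integral_add ind_int sub1 sub2 sub3 sub4) (auto simp: T1_def T2_def T3_def T4_def cpt)
  have RHS0: "0 \<le> RHS" unfolding RHS_def by (intro mult_nonneg_nonneg) auto
  have "integral K f \<le> RHS"
  proof (cases "f integrable_on K")
    case False
    thus ?thesis using RHS0 by (simp add: not_integrable_integral)
  next
    case True
    have "integral K f = integral K f'"
      by (rule integral_spike[OF negN]) (auto simp: f'_def)
    also have "\<dots> \<le> integral K h"
    proof (rule integral_le)
      show "f' integrable_on K" by (rule integrable_spike[OF True negN]) (auto simp: f'_def)
      show "h integrable_on K" using hint by blast
    qed (rule fh)
    also have "integral K h = (norm g1)^2 * measure lebesgue T1 + (norm g2)^2 * measure lebesgue T2
      + (norm g3)^2 * measure lebesgue T3 + (norm g4)^2 * measure lebesgue T4"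
      using hint by (rule integral_unique)
    also note bound
    finally show ?thesis .
  qed
  thus ?thesis unfolding K_def f_def RHS_def .
qed

end
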